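(* Let $\mathcal{T}$ be a $2$-eligible microdata table and $l=2$. Then the algorithm described in the context (with arbitrary tie-breaking) always terminates during Phase One or Phase Two, and its output is a feasible solution of the reformulated tuple minimization problem whose residue set $\ddot{R}$ satisfies $|\ddot{R}| \le OPT + 1$.
   Context: A microdata table $\mathcal{T}$ is a multiset of $n$ tuples with values on $d$ quasi-identifier (QI) attributes and one sensitive attribute (SA). For a multiset $Q$ and SA value $v$, $h(Q,v)$ is the number of tuples in $Q$ with SA value $v$, $h(Q)=\max_v h(Q,v)$, pillars of $Q$ are the $v$ with $h(Q,v)=h(Q)$; $Q$ is $l$-eligible if $|Q|\ge l\cdot h(Q)$. Let $Q_1,\dots,Q_s$ be the maximal classes of tuples of $\mathcal{T}$ with identical values on all QI attributes. Reformulated tuple minimization: choose sub-multisets $Q'_i\subseteq Q_i$ and $R'=\mathcal{T}\setminus\bigcup_i Q'_i$ with all $Q'_i$ and $R'$ $l$-eligible, minimizing $|R'|$; $OPT$ is the minimum. The algorithm only moves tuples from the groups into a set $R$ (initially empty). Phase One: for each $i$, while $Q_i$ is not $l$-eligible, move a tuple of a pillar of $Q_i$ to $R$; if then $R$ is $l$-eligible, terminate. Phase Two terminology (w.r.t. current state): a group $Q$ is thin if $|Q|=l\cdot h(Q)$ and fat if $|Q|\ge l\cdot h(Q)+1$; $Q$ is conflicting if some pillar of $Q$ is a pillar of $R$; $Q$ is dead if thin and conflicting, alive otherwise; an SA value $v$ is alive if some alive group $Q$ has $h(Q,v)>0$. Phase Two iterates: if no SA value is alive, Phase Two ends (and Phase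 Three would follow). Otherwise pick an alive SA value $v$ minimizing $h(R,v)$ and an alive group $Q$ with $h(Q,v)>0$ (ties arbitrary); if $Q$ is fat move one tuple with SA value $v$ from $Q$ to $R$; if $Q$ is thin move one tuple of each pillar of $Q$ to $R$. If $R$ is now $l$-eligible, the algorithm terminates; $\ddot{R}$ is $R$ at termination. *)

theory Defs
  imports "HOL-Library.Multiset"
begin

text \<open>A tuple is a pair (QI value, SA value); a table is a multiset of tuples.\<close>

definition hv :: "('q \<times> 's) multiset \<Rightarrow> 's \<Rightarrow> nat" where
  "hv Q v = count (image_mset snd Q) v"

definition hmax :: "('q \<times> 's) multiset \<Rightarrow> nat" where
  "hmax Q = Max (insert 0 (hv Q ` snd ` set_mset Q))"

definition pillars :: "('q \<times> 's) multiset \<Rightarrow> 's set" where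
  "pillars Q = {v. hv Q v = hmax Q}"

definition eligible :: "nat \<Rightarrow> ('q \<times> 's) multiset \<Rightarrow> bool" where
  "eligible l Q \<longleftrightarrow> size Q \<ge> l * hmax Q"

definition thin :: "nat \<Rightarrow> ('q \<times> 's) multiset \<Rightarrow> bool" where
  "thin l Q \<longleftrightarrow> size Q = l * hmax Q"

definition fat :: "nat \<Rightarrow> ('q \<times> 's) multiset \<Rightarrow> bool" where
  "fat l Q \<longleftrightarrow> size Q \<ge> l * hmax Q + 1"

definition conflicting :: "('q \<times> 's) multiset \<Rightarrow> ('q \<times> 's) multiset \<Rightarrow> bool" where
  "conflicting Q R \<longleftrightarrow> pillars Q \<inter> pillars R \<noteq> {}"

definition dead :: "nat \<Rightarrow> ('q \<times> 's) multiset \<Rightarrow> ('q \<times> 's) multiset \<Rightarrow> bool" where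
  "dead l Q R \<longleftrightarrow> thin l Q \<and> conflicting Q R"

definition alive_grp :: "nat \<Rightarrow> ('q \<times> 's) multiset \<Rightarrow> ('q \<times> 's) multiset \<Rightarrow> bool" where
  "alive_grp l Q R \<longleftrightarrow> \<not> dead l Q R"

definition alive_val :: "nat \<Rightarrow> ('q \<Rightarrow> ('q \<times> 's) multiset) \<Rightarrow> ('q \<times> 's) multiset \<Rightarrow> 's \<Rightarrow> bool" where
  "alive_val l G R v \<longleftrightarrow> (\<exists>q. alive_grp l (G q) R \<and> hv (G q) v > 0)"

definition qis :: "('q \<times> 's) multiset \<Rightarrow> 'q set" where
  "qis T = fst ` set_mset T"

definition grp :: "('q \<times> 's) multiset \<Rightarrow> 'q \<Rightarrow> ('q \<times> 's) multiset" where
  "grp T q = filter_mset (\<lambda>t. fst t = q) T"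

definition residue :: "('q \<times> 's) multiset \<Rightarrow> ('q \<Rightarrow> ('q \<times> 's) multiset) \<Rightarrow> ('q \<times> 's) multiset" where
  "residue T Q' = T - (\<Sum>q\<in>qis T. Q' q)"

definition feasible_sol :: "nat \<Rightarrow> ('q \<times> 's) multiset \<Rightarrow> ('q \<Rightarrow> ('q \<times> 's) multiset) \<Rightarrow> bool" where
  "feasible_sol l T Q' \<longleftrightarrow>
     (\<forall>q. Q' q \<subseteq># grp T q \<and> eligible l (Q' q)) \<and> eligible l (residue T Q')"

definition OPT :: "nat \<Rightarrow> ('q \<times> 's) multiset \<Rightarrow> nat" where
  "OPT l T = Min {size (residue T Q') | Q'. feasible_sol l T Q'}"

text \<open>The algorithm, as a nondeterministic transition system (arbitrary tie-breaking).
  Phase One processes the QI classes in the order of a list.  \<open>PhaseTwoEnded\<close> is the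
  state in which Phase Two ends because no SA value is alive (Phase Three would follow).\<close>

datatype 'q phase = PhaseOne "'q list" | PhaseTwo | Terminated | PhaseTwoEnded

type_synonym ('q, 's) alg_state =
  "'q phase \<times> ('q \<Rightarrow> ('q \<times> 's) multiset) \<times> ('q \<times> 's) multiset"

inductive alg_step :: "nat \<Rightarrow> ('q, 's) alg_state \<Rightarrow> ('q, 's) alg_state \<Rightarrow> bool" for l where
  p1_move: "\<not> eligible l (G q) \<Longrightarrow> t \<in># G q \<Longrightarrow> snd t \<in> pillars (G q) \<Longrightarrow>
     alg_step l (PhaseOne (q # qs), G, R) (PhaseOne (q # qs), G(q := G q - {#t#}), R + {#t#})"
| p1_next: "eligible l (G q) \<Longrightarrow> alg_step l (PhaseOne (q # qs), G, R) (PhaseOne qs, G, R)"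
| p1_term: "eligible l R \<Longrightarrow> alg_step l (PhaseOne [], G, R) (Terminated, G, R)"
| p1_to_p2: "\<not> eligible l R \<Longrightarrow> alg_step l (PhaseOne [], G, R) (PhaseTwo, G, R)"
| p2_end: "(\<forall>v. \<not> alive_val l G R v) \<Longrightarrow> alg_step l (PhaseTwo, G, R) (PhaseTwoEnded, G, R)"
| p2_fat: "alive_val l G R v \<Longrightarrow> (\<forall>w. alive_val l G R w \<longrightarrow> hv R v \<le> hv R w) \<Longrightarrow>
     alive_grp l (G q) R \<Longrightarrow> hv (G q) v > 0 \<Longrightarrow> fat l (G q) \<Longrightarrow>
     t \<in># G q \<Longrightarrow> snd t = v \<Longrightarrow> G' = G(q := G q - {#t#}) \<Longrightarrow> R' = R + {#t#} \<Longrightarrow>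
     alg_step l (PhaseTwo, G, R) (if eligible l R' then Terminated else PhaseTwo, G', R')"
| p2_thin: "alive_val l G R v \<Longrightarrow> (\<forall>w. alive_val l G R w \<longrightarrow> hv R v \<le> hv R w) \<Longrightarrow>
     alive_grp l (G q) R \<Longrightarrow> hv (G q) v > 0 \<Longrightarrow> thin l (G q) \<Longrightarrow>
     M = mset_set {t \<in> set_mset (G q). snd t \<in> pillars (G q)} \<Longrightarrow>
     G' = G(q := G q - M) \<Longrightarrow> R' = R + M \<Longrightarrow>
     alg_step l (PhaseTwo, G, R) (if eligible l R' then Terminated else PhaseTwo, G', R')"

definition alg_init :: "('q \<times> 's) multiset \<Rightarrow> 'q list \<Rightarrow> ('q, 's) alg_state" where
  "alg_init T qs = (PhaseOne qs, grp T, {#})"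

end

theory Submission
  imports Defs
begin

lemma hv_add[simp]: "hv (A + B) v = hv A v + hv B v"
  by (simp add: hv_def)

lemma hv_empty[simp]: "hv {#} v = 0"
  by (simp add: hv_def)

lemma hv_single: "hv {#t#} v = (if snd t = v then 1 else 0)"
  by (simp add: hv_def)

lemma hv_add_mset[simp]: "hv (add_mset t M) v = hv M v + (if snd t = v then 1 else 0)"
  by (simp add: hv_def)

lemma hv_diff: "B \<subseteq># A \<Longrightarrow> hv (A - B) v = hv A v - hv B v"
  by (simp add: hv_def image_mset_Diff)

lemma hv_mono: "A \<subseteq># B \<Longrightarrow> hv A v \<le> hv B v"
  by (simp add: hv_def image_mset_subseteq_mono mset_subset_eq_count)

lemma hv_le_size: "hv A v \<le> size A"
  by (metis count_le_size hv_def size_image_mset)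

lemma hv_sum: "finite S \<Longrightarrow> hv (\<Sum>q\<in>S. G q) v = (\<Sum>q\<in>S. hv (G q) v)"
  by (induct S rule: finite_induct) auto

lemma size_sum: "finite S \<Longrightarrow> size (\<Sum>q\<in>S. (G q :: 'a multiset)) = (\<Sum>q\<in>S. size (G q))"
  by (induct S rule: finite_induct) auto

lemma hv_pos_mem: "hv Q v > 0 \<Longrightarrow> v \<in> snd ` set_mset Q"
  by (simp add: hv_def)

lemma hv_le_hmax: "hv Q v \<le> hmax Q"
proof (cases "hv Q v = 0")
  case False
  then have "v \<in> snd ` set_mset Q" by (intro hv_pos_mem) simp
  then have "hv Q v \<in> insert 0 (hv Q ` snd ` set_mset Q)" by (intro insertI2 imageI)
  moreover have "finite (insert 0 (hv Q ` snd ` set_mset Q))" by simp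
  ultimately show ?thesis unfolding hmax_def by (rule Max_ge[rotated])
next
  case True then show ?thesis by simp
qed

lemma hmax_le: "(\<And>v. hv Q v \<le> k) \<Longrightarrow> hmax Q \<le> k"
  unfolding hmax_def by (subst Max_le_iff) auto

lemma hmax_ex: "hmax Q > 0 \<Longrightarrow> \<exists>t. t \<in># Q \<and> hv Q (snd t) = hmax Q"
proof -
  assume a: "hmax Q > 0"
  have "hmax Q \<in> insert 0 (hv Q ` snd ` set_mset Q)" unfolding hmax_def
    by (intro Max_in) auto
  with a show ?thesis by fastforce
qed

lemma eligible2_iff: "eligible 2 Q \<longleftrightarrow> (\<forall>v. 2 * hv Q v \<le> size Q)"
proof
  assume "eligible 2 Q" then show "\<forall>v. 2 * hv Q v \<le> size Q"
    using hv_le_hmax unfolding eligible_def by (meson le_trans mult_le_mono2)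
next
  assume a: "\<forall>v. 2 * hv Q v \<le> size Q"
  show "eligible 2 Q"
  proof (cases "hmax Q = 0")
    case False
    then obtain t where "hv Q (snd t) = hmax Q" using hmax_ex[of Q] by auto
    then show ?thesis using a unfolding eligible_def by metis
  qed (simp add: eligible_def)
qed

lemma hv_only: "(\<And>u. u \<noteq> v \<Longrightarrow> hv M u = 0) \<Longrightarrow> size M = hv M v"
proof -
  assume a: "\<And>u. u \<noteq> v \<Longrightarrow> hv M u = 0"
  have "image_mset snd M = replicate_mset (hv M v) v"
    by (rule multiset_eqI) (metis a count_replicate_mset hv_def)
  then show ?thesis by (metis size_image_mset size_replicate_mset)
qed

lemma hv_two_le_size: "v \<noteq> w \<Longrightarrow> hv A v + hv A w \<le> size A"
proof -
  assume vw: "v \<noteq> w"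
  let ?X = "image_mset snd A"
  have "replicate_mset (count ?X v) v + replicate_mset (count ?X w) w \<subseteq># ?X"
    by (rule mset_subset_eqI) (use vw in auto)
  then have "size (replicate_mset (count ?X v) v + replicate_mset (count ?X w) w) \<le> size ?X"
    by (rule size_mset_mono)
  then show ?thesis by (simp add: hv_def)
qed

lemma sum_hv_le_size: "finite W \<Longrightarrow> (\<Sum>w\<in>W. hv Q w) \<le> size Q"
proof -
  assume f: "finite W"
  have "(\<Sum>w\<in>W. hv Q w) = size (filter_mset (\<lambda>t. snd t \<in> W) Q)" using f
  proof (induct W rule: finite_induct)
    case empty then show ?case by simp
  next
    case (insert a W)
    have "filter_mset (\<lambda>t. snd t \<in> insert a W) Q = filter_mset (\<lambda>t. snd t = a) Q + filter_mset (\<lambda>t. snd t \<in> W) Q"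
    proof (rule multiset_eqI)
      fix x show "count (filter_mset (\<lambda>t. snd t \<in> insert a W) Q) x =
          count (filter_mset (\<lambda>t. snd t = a) Q + filter_mset (\<lambda>t. snd t \<in> W) Q) x"
        using insert.hyps(2) by (cases "snd x = a") auto
    qed
    moreover have "size (filter_mset (\<lambda>t. snd t = a) Q) = hv Q a"
    proof -
      have "size (filter_mset (\<lambda>t. snd t = a) Q) = size (image_mset snd (filter_mset (\<lambda>t. snd t = a) Q))"
        by simp
      also have "image_mset snd (filter_mset (\<lambda>t. snd t = a) Q) = filter_mset (\<lambda>x. x = a) (image_mset snd Q)"
        by (rule image_mset_filter_mset_swap)
      also have "\<dots> = replicate_mset (hv Q a) a" unfolding hv_def by (rule filter_eq_replicate_mset)
      finally show ?thesis by simp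
    qed
    ultimately show ?case using insert by simp
  qed
  also have "size (filter_mset (\<lambda>t. snd t \<in> W) Q) \<le> size Q" by (rule size_filter_mset_lesseq)
  finally show ?thesis .
qed

lemma noneli_dom: "\<not> eligible 2 R \<Longrightarrow> \<exists>p. size R < 2 * hv R p \<and> hv R p = hmax R \<and>
   (\<forall>w. w \<noteq> p \<longrightarrow> hv R w < hv R p) \<and> pillars R = {p}"
proof -
  assume "\<not> eligible 2 R"
  then obtain p where p: "size R < 2 * hv R p" unfolding eligible2_iff by (auto simp: not_le)
  have lt: "hv R w < hv R p" if "w \<noteq> p" for w
    using hv_two_le_size[OF that, of R] p by linarith
  have le: "hv R w \<le> hv R p" for w
    using lt[of w] by (cases "w = p") auto
  have "hmax R \<le> hv R p" using le by (rule hmax_le)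
  then have eq: "hv R p = hmax R" using hv_le_hmax[of R p] by simp
  have "pillars R = {p}"
  proof
    show "pillars R \<subseteq> {p}"
    proof
      fix w assume "w \<in> pillars R"
      then have "hv R w = hmax R" by (simp add: pillars_def)
      then show "w \<in> {p}" using lt[of w] eq by (cases "w = p") auto
    qed
    show "{p} \<subseteq> pillars R" using eq by (simp add: pillars_def)
  qed
  then show ?thesis using p lt eq by blast
qed


lemma finite_qis[simp]: "finite (qis T)"
  by (simp add: qis_def)

lemma grp_fst: "t \<in># grp T q \<Longrightarrow> fst t = q"
  by (simp add: grp_def)

lemma grp_out: "q \<notin> qis T \<Longrightarrow> grp T q = {#}"
proof -
  assume a: "q \<notin> qis T"
  have "\<forall>t. t \<in># T \<longrightarrow> fst t \<noteq> q"
  proof (intro allI impI)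
    fix t assume "t \<in># T"
    then have "fst t \<in> qis T" unfolding qis_def by (rule imageI)
    then show "fst t \<noteq> q" using a by auto
  qed
  then show ?thesis unfolding grp_def by simp
qed

lemma sum_grp: "finite S \<Longrightarrow> (\<Sum>q\<in>S. grp T q) = filter_mset (\<lambda>t. fst t \<in> S) T"
proof (induct S rule: finite_induct)
  case empty then show ?case by (simp add: filter_mset_eq_mempty_iff)
next
  case (insert a S)
  have "filter_mset (\<lambda>t. fst t \<in> insert a S) T = grp T a + filter_mset (\<lambda>t. fst t \<in> S) T"
    unfolding grp_def by (rule multiset_eqI) (use insert in auto)
  then show ?case using insert by simp
qed

lemma T_decomp: "T = (\<Sum>q\<in>qis T. grp T q)"
proof -
  have "filter_mset (\<lambda>t. fst t \<in> qis T) T = T"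
    by (simp add: qis_def filter_mset_eq_conv)
  then show ?thesis using sum_grp[of "qis T" T] by simp
qed

lemma sum_diff_add: "finite S \<Longrightarrow> (\<And>q. q \<in> S \<Longrightarrow> B q \<subseteq># A q) \<Longrightarrow>
   (\<Sum>q\<in>S. (A q - B q)) + (\<Sum>q\<in>S. B q) = (\<Sum>q\<in>S. A q :: 'a multiset)"
proof (induct S rule: finite_induct)
  case (insert a S)
  have 1: "A a - B a + B a = A a" using insert by (simp add: subset_mset.diff_add)
  have "(\<Sum>q\<in>insert a S. A q - B q) + (\<Sum>q\<in>insert a S. B q) =
        (A a - B a + B a) + ((\<Sum>q\<in>S. A q - B q) + (\<Sum>q\<in>S. B q))"
    using insert.hyps by (simp add: add_ac)
  then show ?case using insert 1 by simp
qed simp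

lemma removal: "Q' \<subseteq># Q \<Longrightarrow> eligible 2 Q' \<Longrightarrow> 2 * hv Q v \<le> size Q + hv (Q - Q') v"
proof -
  assume s: "Q' \<subseteq># Q" and e: "eligible 2 Q'"
  have 1: "hv (Q - Q') v = hv Q v - hv Q' v" using s by (rule hv_diff)
  have 2: "size (Q - Q') = size Q - size Q'" using s by (rule size_Diff_submset)
  have 3: "2 * hv Q' v \<le> size Q'" using e unfolding eligible2_iff by (rule spec)
  have 4: "hv Q' v \<le> hv Q v" using s by (rule hv_mono)
  have 5: "size Q' \<le> size Q" using s by (rule size_mset_mono)
  have 6: "hv (Q - Q') v \<le> size (Q - Q')" by (rule hv_le_size)
  have a: "hv (Q - Q') v + hv Q' v = hv Q v" using 1 4 by simp
  have b: "hv (Q - Q') v + size Q' \<le> size Q" using 2 5 6 by simp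
  show ?thesis using a b 3 by linarith
qed

definition RI :: "('q \<times> 's) multiset \<Rightarrow> ('q \<times> 's) multiset \<Rightarrow> bool" where
  "RI A B \<longleftrightarrow> (\<exists>v. (\<forall>u. u \<noteq> v \<longrightarrow> hv (A - B) u = 0) \<and>
     (hv (A - B) v = 0 \<or> hv (A - B) v + size A \<le> 2 * hv A v))"

lemma PG: "B \<subseteq># A \<Longrightarrow> RI A B \<Longrightarrow> Q' \<subseteq># A \<Longrightarrow> eligible 2 Q' \<Longrightarrow>
   size (A - B) \<le> size (A - Q') \<and> (\<forall>u. hv (A - B) u \<le> hv (A - Q') u)"
proof -
  assume "B \<subseteq># A" "RI A B" and q: "Q' \<subseteq># A" "eligible 2 Q'"
  then obtain v where v: "\<And>u. u \<noteq> v \<Longrightarrow> hv (A - B) u = 0"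
    and v2: "hv (A - B) v = 0 \<or> hv (A - B) v + size A \<le> 2 * hv A v"
    unfolding RI_def by blast
  have r: "2 * hv A v \<le> size A + hv (A - Q') v" using removal[OF q] .
  have hvv: "hv (A - B) v \<le> hv (A - Q') v" using v2 r by linarith
  have "\<forall>u. hv (A - B) u \<le> hv (A - Q') u" using hvv v by (metis le0)
  moreover have "size (A - B) \<le> size (A - Q')"
    using hv_only[of v "A - B"] v hvv hv_le_size[of "A - Q'" v] by simp
  ultimately show ?thesis by blast
qed

lemma RI_init: "RI A A"
  unfolding RI_def by auto

lemma RI_move:
  assumes sub: "G \<subseteq># A" and ri: "RI A G" and ne: "\<not> eligible 2 G" and t: "t \<in># G"
    and pil: "snd t \<in> pillars G"
  shows "RI A (G - {#t#})"
proof -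
  obtain v where v: "\<And>u. u \<noteq> v \<Longrightarrow> hv (A - G) u = 0"
    and v2: "hv (A - G) v = 0 \<or> hv (A - G) v + size A \<le> 2 * hv A v"
    using ri unfolding RI_def by blast
  define w where "w = snd t"
  have tG: "{#t#} \<subseteq># G" using t by simp
  have eq: "A - (G - {#t#}) = (A - G) + {#t#}"
  proof -
    have "A - (G - {#t#}) = A + {#t#} - G" using tG by (rule subset_mset.diff_diff_right)
    also have "\<dots> = A - G + {#t#}" using sub by (rule subset_mset.diff_add_assoc2)
    finally show ?thesis .
  qed
  have hvG: "hv G u + hv (A - G) u = hv A u" for u
    using hv_diff[OF sub, of u] hv_mono[OF sub, of u] by simp
  have szG: "size G + size (A - G) = size A"
    using size_Diff_submset[OF sub] size_mset_mono[OF sub] by simp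
  have pw: "hv G w = hmax G" using pil unfolding pillars_def w_def by simp
  have ne2: "size G < 2 * hv G w" using ne pw unfolding eligible_def by simp
  have sz1: "size (A - G) = hv (A - G) v" using hv_only[of v "A - G"] v by blast
  have hvM: "hv (A - (G - {#t#})) u = hv (A - G) u + (if u = w then 1 else 0)" for u
    unfolding eq w_def by (simp add: hv_single)
  show ?thesis
  proof (cases "hv (A - G) v = 0")
    case True
    then have z: "size (A - G) = 0" using sz1 by simp
    have z2: "hv (A - G) u = 0" for u using hv_le_size[of "A - G" u] z by simp
    have "size G = size A" using szG z by simp
    moreover have "hv G w = hv A w" using hvG[of w] z2[of w] by simp
    ultimately have "1 + size A \<le> 2 * hv A w" using ne2 by simp
    moreover have "hv (A - (G - {#t#})) u = 0" if "u \<noteq> w" for u using hvM[of u] z2[of u] that by simp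
    moreover have "hv (A - (G - {#t#})) w = 1" using hvM[of w] z2[of w] by simp
    ultimately show ?thesis unfolding RI_def by (intro exI[of _ w]) simp
  next
    case False
    then have y: "hv (A - G) v + size A \<le> 2 * hv A v" using v2 by simp
    have wv: "w = v"
    proof (rule ccontr)
      assume wv: "w \<noteq> v"
      then have "hv (A - G) w = 0" using v by blast
      then have a: "hv G w = hv A w" using hvG[of w] by simp
      have b: "hv A v + hv A w \<le> size A" using hv_two_le_size wv by metis
      show False using ne2 szG sz1 y a b by linarith
    qed
    have c: "hv G v + hv (A - G) v = hv A v" by (rule hvG)
    have "hv (A - G) v + 1 + size A \<le> 2 * hv A v"
      using ne2[unfolded wv] c szG sz1 by linarith
    moreover have "hv (A - (G - {#t#})) u = 0" if "u \<noteq> v" for u using hvM[of u] v[OF that] that wv by simp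
    moreover have "hv (A - (G - {#t#})) v = hv (A - G) v + 1" using hvM[of v] wv by simp
    ultimately show ?thesis unfolding RI_def by (intro exI[of _ v]) simp
  qed
qed


definition Base :: "('q \<times> 's) multiset \<Rightarrow> ('q \<Rightarrow> ('q \<times> 's) multiset) \<Rightarrow> ('q \<times> 's) multiset \<Rightarrow> bool" where
  "Base T G R \<longleftrightarrow> (\<forall>q. G q \<subseteq># grp T q) \<and> T = R + (\<Sum>q\<in>qis T. G q)"

lemma base_R: "Base T G R \<Longrightarrow> R = (\<Sum>q\<in>qis T. grp T q - G q)"
proof -
  assume b: "Base T G R"
  have "(\<Sum>q\<in>qis T. grp T q - G q) + (\<Sum>q\<in>qis T. G q) = (\<Sum>q\<in>qis T. grp T q)"
    using b unfolding Base_def by (intro sum_diff_add) auto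
  also have "\<dots> = T" using T_decomp by metis
  also have "\<dots> = R + (\<Sum>q\<in>qis T. G q)" using b unfolding Base_def by blast
  finally show ?thesis by simp
qed

lemma base_residue: "Base T G R \<Longrightarrow> R = residue T G"
  unfolding Base_def residue_def by (metis add_diff_cancel_right')

lemma base_size: "Base T G R \<Longrightarrow> size R \<le> size T"
  unfolding Base_def by (metis le_add1 size_union)

lemma residue_sum: "(\<And>q. Q' q \<subseteq># grp T q) \<Longrightarrow> residue T Q' = (\<Sum>q\<in>qis T. grp T q - Q' q)"
proof -
  assume s: "\<And>q. Q' q \<subseteq># grp T q"
  have "(\<Sum>q\<in>qis T. grp T q - Q' q) + (\<Sum>q\<in>qis T. Q' q) = (\<Sum>q\<in>qis T. grp T q)"
    using s by (intro sum_diff_add) auto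
  then have "T = (\<Sum>q\<in>qis T. grp T q - Q' q) + (\<Sum>q\<in>qis T. Q' q)" using T_decomp by metis
  then show ?thesis unfolding residue_def by (metis add_diff_cancel_right')
qed

lemma F_bound:
  assumes b: "Base T G R" and ri: "\<And>q. RI (grp T q) (G q)" and f: "feasible_sol 2 T Q'"
  shows "size R \<le> size (residue T Q') \<and> (\<forall>v. hv R v \<le> hv (residue T Q') v)"
proof -
  have fs: "\<And>q. Q' q \<subseteq># grp T q" "\<And>q. eligible 2 (Q' q)" using f unfolding feasible_sol_def by auto
  have r1: "R = (\<Sum>q\<in>qis T. grp T q - G q)" using base_R[OF b] .
  have r2: "residue T Q' = (\<Sum>q\<in>qis T. grp T q - Q' q)" using residue_sum fs(1) by metis
  have pg: "size (grp T q - G q) \<le> size (grp T q - Q' q) \<and> (\<forall>u. hv (grp T q - G q) u \<le> hv (grp T q - Q' q) u)" for q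
    using b ri fs unfolding Base_def by (intro PG) auto
  have "size R \<le> size (residue T Q')" unfolding r1 r2 size_sum[OF finite_qis]
    using pg by (intro sum_mono) auto
  moreover have "hv R v \<le> hv (residue T Q') v" for v unfolding r1 r2 hv_sum[OF finite_qis]
    using pg by (intro sum_mono) auto
  ultimately show ?thesis by blast
qed

lemma base_move:
  assumes b: "Base T G R" and m: "M \<subseteq># G q"
  shows "Base T (G(q := G q - M)) (R + M)"
proof (cases "q \<in> qis T")
  case False
  then have "G q = {#}" using b grp_out unfolding Base_def by (metis subset_mset.le_zero_eq)
  then have "M = {#}" using m by simp
  then show ?thesis using b \<open>G q = {#}\<close> by (simp add: fun_upd_idem)
next
  case True
  have s1: "(\<Sum>r\<in>qis T. (G(q := G q - M)) r) = (G q - M) + (\<Sum>r\<in>qis T - {q}. G r)"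
    using True by (simp add: sum.remove)
  have s2: "(\<Sum>r\<in>qis T. G r) = G q + (\<Sum>r\<in>qis T - {q}. G r)"
    using True by (simp add: sum.remove)
  have "R + M + ((G q - M) + (\<Sum>r\<in>qis T - {q}. G r)) = R + (G q + (\<Sum>r\<in>qis T - {q}. G r))"
    using m by (metis add.assoc subset_mset.add_diff_inverse)
  note eq3 = this
  have "T = R + (\<Sum>r\<in>qis T. G r)" using b unfolding Base_def by blast
  also have "\<dots> = R + (G q + (\<Sum>r\<in>qis T - {q}. G r))" using s2 by (rule arg_cong)
  also have "\<dots> = R + M + ((G q - M) + (\<Sum>r\<in>qis T - {q}. G r))" using eq3 by (rule sym)
  also have "\<dots> = R + M + (\<Sum>r\<in>qis T. (G(q := G q - M)) r)" using s1 by (rule arg_cong[symmetric])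
  finally have e: "T = R + M + (\<Sum>r\<in>qis T. (G(q := G q - M)) r)" .
  have "(G(q := G q - M)) r \<subseteq># grp T q'" if "r = q'" for r q'
  proof (cases "r = q")
    case True
    have "G q - M \<subseteq># G q" by simp
    also have "G q \<subseteq># grp T q" using b unfolding Base_def by blast
    finally show ?thesis using True that by simp
  next
    case False then show ?thesis using b that unfolding Base_def by simp
  qed
  then show ?thesis using e unfolding Base_def by blast
qed

fun Inv :: "('q \<times> 's) multiset \<Rightarrow> ('q, 's) alg_state \<Rightarrow> bool" where
  "Inv T (PhaseOne qs', G, R) = (Base T G R \<and> (\<forall>q. q \<notin> set qs' \<longrightarrow> eligible 2 (G q)) \<and>
      (\<forall>q. RI (grp T q) (G q)))"
| "Inv T (PhaseTwo, G, R) = (Base T G R \<and> (\<forall>q. eligible 2 (G q)) \<and> \<not> eligible 2 R \<and>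
      (\<forall>Q'. feasible_sol 2 T Q' \<longrightarrow> 2 * hmax R \<le> size (residue T Q')))"
| "Inv T (Terminated, G, R) = (feasible_sol 2 T G \<and> R = residue T G \<and>
      (\<forall>Q'. feasible_sol 2 T Q' \<longrightarrow> size R \<le> size (residue T Q') + 1))"
| "Inv T (PhaseTwoEnded, G, R) = False"

fun mu :: "('q \<times> 's) multiset \<Rightarrow> ('q, 's) alg_state \<Rightarrow> nat" where
  "mu T (PhaseOne qs', G, R) = size T - size R + length qs' + 2"
| "mu T (PhaseTwo, G, R) = size T - size R + 1"
| "mu T (Terminated, G, R) = 0"
| "mu T (PhaseTwoEnded, G, R) = 0"

lemma step2:
  assumes b: "Base T G R" and el: "\<forall>r. eligible 2 (G r)" and ne: "\<not> eligible 2 R"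
    and bd: "\<forall>Q'. feasible_sol 2 T Q' \<longrightarrow> 2 * hmax R \<le> size (residue T Q')"
    and p1: "hv R p = hmax R" and p2: "size R < 2 * hv R p" and p3: "\<forall>w. w \<noteq> p \<longrightarrow> hv R w < hv R p"
    and m: "M \<subseteq># G q" and mp: "hv M p = 0" and m1: "\<forall>w. hv M w \<le> 1"
    and ms: "1 \<le> size M" "size M \<le> 2" and me: "eligible 2 (G q - M)"
  shows "Inv T (if eligible 2 (R + M) then Terminated else PhaseTwo, G(q := G q - M), R + M) \<and>
         mu T (if eligible 2 (R + M) then Terminated else PhaseTwo, G(q := G q - M), R + M) < mu T (PhaseTwo, G, R)"
proof -
  let ?G = "G(q := G q - M)" and ?R = "R + M"
  have b2: "Base T ?G ?R" using base_move[OF b m] .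
  have sz: "size ?R \<le> size T" using base_size[OF b2] .
  have el2: "\<forall>r. eligible 2 (?G r)" using el me by simp
  have hm: "hmax ?R \<le> hmax R"
  proof (rule hmax_le)
    fix w show "hv ?R w \<le> hmax R"
    proof (cases "w = p")
      case True then show ?thesis using p1 mp by simp
    next
      case False
      then have "hv R w < hv R p" using p3 by blast
      moreover have "hv M w \<le> 1" using m1 by blast
      ultimately show ?thesis using p1 by simp
    qed
  qed
  show ?thesis
  proof (cases "eligible 2 ?R")
    case True
    have fs: "feasible_sol 2 T ?G" using b2 el2 True base_residue[OF b2]
      unfolding feasible_sol_def Base_def by metis
    have "size ?R \<le> size (residue T Q') + 1" if "feasible_sol 2 T Q'" for Q'
      using bd that p1 p2 ms by fastforce
    then show ?thesis using True fs base_residue[OF b2] by simp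
  next
    case False
    have "2 * hmax ?R \<le> size (residue T Q')" if "feasible_sol 2 T Q'" for Q'
      using bd that hm by fastforce
    then show ?thesis using False b2 el2 sz ms by auto
  qed
qed


lemma alive_exists:
  assumes b: "Base T G R" and ne: "\<not> eligible 2 R" and eT: "eligible 2 T"
  shows "\<exists>v. alive_val 2 G R v"
proof (rule ccontr)
  assume na: "\<not> (\<exists>v. alive_val 2 G R v)"
  obtain p where p: "size R < 2 * hv R p" "pillars R = {p}" using noneli_dom[OF ne] by blast
  have grp_ge: "size (G r) \<le> 2 * hv (G r) p" for r
  proof (cases "G r = {#}")
    case False
    then obtain t where t: "t \<in># G r" by auto
    then have "hv (G r) (snd t) > 0" by (simp add: hv_def)
    then have "dead 2 (G r) R" using na unfolding alive_val_def alive_grp_def by blast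
    then have th: "thin 2 (G r)" and "pillars (G r) \<inter> pillars R \<noteq> {}"
      unfolding dead_def conflicting_def by auto
    then have "p \<in> pillars (G r)" using p by auto
    then show ?thesis using th unfolding thin_def pillars_def by simp
  qed simp
  have "2 * hv T p = 2 * hv R p + (\<Sum>r\<in>qis T. 2 * hv (G r) p)"
    using b unfolding Base_def by (metis hv_add hv_sum[OF finite_qis] sum_distrib_left add_mult_distrib2)
  also have "\<dots> > size R + (\<Sum>r\<in>qis T. size (G r))"
    using p(1) grp_ge by (intro add_less_le_mono sum_mono) auto
  also have "size R + (\<Sum>r\<in>qis T. size (G r)) = size T"
    using b unfolding Base_def by (metis size_sum[OF finite_qis] size_union)
  finally show False using eT eligible2_iff by (metis not_le)
qed

lemma thin_facts:
  assumes sub: "G \<subseteq># grp T q" and th: "thin 2 G" and pos: "hv G v > 0"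
    and S: "S = {t \<in> set_mset G. snd t \<in> pillars G}"
  shows "mset_set S \<subseteq># G \<and> 1 \<le> size (mset_set S) \<and> size (mset_set S) \<le> 2 \<and>
         (\<forall>w. hv (mset_set S) w = (if hv G w > 0 \<and> hv G w = hmax G then 1 else 0)) \<and>
         eligible 2 (G - mset_set S)"
proof -
  define W where "W = {w. hv G w > 0 \<and> hv G w = hmax G}"
  have SG: "S \<subseteq> set_mset G" using S by blast
  have fS: "finite S" using SG by (rule finite_subset) simp
  have fstq: "fst t = q" if "t \<in> S" for t
  proof -
    have "t \<in># G" using that SG by blast
    then have "t \<in># grp T q" using sub by (rule mset_subset_eqD[rotated])
    then show ?thesis by (rule grp_fst)
  qed
  have inj: "inj_on snd S"
  proof (rule inj_onI)
    fix x y assume "x \<in> S" "y \<in> S" "snd x = snd y"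
    then show "x = y" using fstq[of x] fstq[of y] by (simp add: prod_eq_iff)
  qed
  have WS: "snd ` S = W"
  proof
    show "snd ` S \<subseteq> W"
    proof
      fix w assume "w \<in> snd ` S"
      then obtain t where t: "t \<in> S" "w = snd t" by blast
      then have "t \<in># G" "snd t \<in> pillars G" using S by auto
      then have "hv G (snd t) > 0" "hv G (snd t) = hmax G"
        by (simp add: hv_def, simp add: pillars_def)
      then show "w \<in> W" unfolding W_def using t by simp
    qed
    show "W \<subseteq> snd ` S"
    proof
      fix w assume "w \<in> W"
      then have h: "hv G w > 0" "hv G w = hmax G" unfolding W_def by auto
      have "w \<in> snd ` set_mset G" using h(1) by (rule hv_pos_mem)
      then obtain t where t: "t \<in># G" "w = snd t" by blast
      then have "t \<in> S" using S h(2) unfolding pillars_def by simp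
      then show "w \<in> snd ` S" using t by blast
    qed
  qed
  have fW: "finite W" using WS fS by blast
  have hvM: "hv (mset_set S) w = (if w \<in> W then 1 else 0)" for w
    unfolding hv_def image_mset_mset_set[OF inj] WS using fW by simp
  have sub2: "mset_set S \<subseteq># G"
  proof -
    have "mset_set S \<subseteq># mset_set (set_mset G)"
      using SG by (intro subset_imp_msubset_mset_set) simp_all
    also have "\<dots> \<subseteq># G" by (rule mset_set_set_mset_msubset)
    finally show ?thesis .
  qed
  have szM: "size (mset_set S) = card W" using card_image[OF inj] WS by simp
  have hpos: "hmax G > 0" using pos hv_le_hmax[of G v] by simp
  obtain t where t: "t \<in># G" "hv G (snd t) = hmax G" using hmax_ex[OF hpos] by blast
  have "snd t \<in> W" using t hpos unfolding W_def by simp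
  then have "W \<noteq> {}" by blast
  then have c1: "1 \<le> card W" using fW by (simp add: Suc_le_eq card_gt_0_iff)
  have "(\<Sum>w\<in>W. hv G w) = (\<Sum>w\<in>W. hmax G)" unfolding W_def by (rule sum.cong) simp_all
  also have "\<dots> = card W * hmax G" by simp
  finally have "card W * hmax G \<le> size G" using sum_hv_le_size[OF fW, of G] by simp
  then have "card W * hmax G \<le> 2 * hmax G" using th unfolding thin_def by simp
  then have c2: "card W \<le> 2" using hpos by simp
  have "2 * hv (G - mset_set S) w \<le> size (G - mset_set S)" for w
  proof -
    have e: "hv (G - mset_set S) w = hv G w - hv (mset_set S) w" using hv_diff[OF sub2] .
    have le: "hv G w \<le> hmax G" by (rule hv_le_hmax)
    have "hv (G - mset_set S) w \<le> hmax G - 1"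
    proof (cases "w \<in> W")
      case True then show ?thesis using e hvM[of w] le by simp
    next
      case False
      then have "hv G w = 0 \<or> hv G w \<noteq> hmax G" unfolding W_def by auto
      then have "hv G w \<le> hmax G - 1" using le hpos by auto
      then show ?thesis using e hvM[of w] False by simp
    qed
    moreover have "size (G - mset_set S) = 2 * hmax G - card W"
      using size_Diff_submset[OF sub2] szM th unfolding thin_def by simp
    ultimately show ?thesis using c2 by linarith
  qed
  then have "eligible 2 (G - mset_set S)" unfolding eligible2_iff by blast
  then show ?thesis using sub2 szM c1 c2 hvM unfolding W_def by auto
qed


lemma inv_step:
  assumes st: "alg_step 2 s s'" and inv: "Inv T s" and eT: "eligible 2 T"
  shows "Inv T s' \<and> mu T s' < mu T s"
  using st inv
proof (induction rule: alg_step.induct)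
  case (p1_move G q t qs R)
  have b: "Base T G R" and el: "\<forall>r. r \<notin> set (q # qs) \<longrightarrow> eligible 2 (G r)"
    and ri: "\<forall>r. RI (grp T r) (G r)" using p1_move.prems by auto
  have m: "{#t#} \<subseteq># G q" using p1_move.hyps(2) by simp
  have b2: "Base T (G(q := G q - {#t#})) (R + {#t#})" using base_move[OF b m] .
  have sub: "G q \<subseteq># grp T q" using b unfolding Base_def by blast
  have ri2: "RI (grp T r) ((G(q := G q - {#t#})) r)" for r
  proof (cases "r = q")
    case True then show ?thesis using RI_move[OF sub _ p1_move.hyps(1,2,3)] ri by simp
  next
    case False then show ?thesis using ri by simp
  qed
  have el2: "\<forall>r. r \<notin> set (q # qs) \<longrightarrow> eligible 2 ((G(q := G q - {#t#})) r)" using el by simp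
  have "size (R + {#t#}) \<le> size T" using base_size[OF b2] .
  then have "mu T (PhaseOne (q # qs), G(q := G q - {#t#}), R + {#t#}) < mu T (PhaseOne (q # qs), G, R)"
    by simp
  then show ?case using b2 ri2 el2 by simp
next
  case (p1_next G q qs R)
  then show ?case by auto
next
  case (p1_term R G)
  have b: "Base T G R" and el: "\<forall>r. eligible 2 (G r)"
    and ri: "\<forall>r. RI (grp T r) (G r)" using p1_term.prems by auto
  have res: "R = residue T G" using base_residue[OF b] .
  have fs: "feasible_sol 2 T G" unfolding feasible_sol_def using b el p1_term.hyps res
    unfolding Base_def by simp
  have "size R \<le> size (residue T Q') + 1" if "feasible_sol 2 T Q'" for Q'
    using F_bound[OF b _ that] ri by fastforce
  then show ?case using fs res by simp
next
  case (p1_to_p2 R G)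
  have b: "Base T G R" and el: "\<forall>r. eligible 2 (G r)"
    and ri: "\<forall>r. RI (grp T r) (G r)" using p1_to_p2.prems by auto
  have "2 * hmax R \<le> size (residue T Q')" if f: "feasible_sol 2 T Q'" for Q'
  proof -
    have hv: "hv R v \<le> hv (residue T Q') v" for v using F_bound[OF b _ f] ri by blast
    have "hmax R \<le> hmax (residue T Q')"
      by (rule hmax_le) (metis hv hv_le_hmax le_trans)
    moreover have "2 * hmax (residue T Q') \<le> size (residue T Q')"
      using f unfolding feasible_sol_def eligible_def by simp
    ultimately show ?thesis by simp
  qed
  then show ?case using b el p1_to_p2.hyps by simp
next
  case (p2_end G R)
  have "Base T G R" "\<not> eligible 2 R" using p2_end.prems by auto
  then have "\<exists>v. alive_val 2 G R v" using alive_exists eT by blast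
  then show ?case using p2_end.hyps by blast
next
  case (p2_fat G R v q t G' R')
  have b: "Base T G R" and el: "\<forall>r. eligible 2 (G r)" and ne: "\<not> eligible 2 R"
    and bd: "\<forall>Q'. feasible_sol 2 T Q' \<longrightarrow> 2 * hmax R \<le> size (residue T Q')"
    using p2_fat.prems by auto
  obtain p where p: "size R < 2 * hv R p" "hv R p = hmax R" "\<forall>w. w \<noteq> p \<longrightarrow> hv R w < hv R p"
    "pillars R = {p}" using noneli_dom[OF ne] by blast
  have vp: "v \<noteq> p"
  proof
    assume vp: "v = p"
    have fat: "2 * hmax (G q) + 1 \<le> size (G q)" using p2_fat.hyps(5) unfolding fat_def by simp
    have "\<exists>w. w \<noteq> p \<and> hv (G q) w > 0"
    proof (rule ccontr)
      assume "\<not> (\<exists>w. w \<noteq> p \<and> hv (G q) w > 0)"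
      then have "size (G q) = hv (G q) p" using hv_only[of p "G q"] by auto
      then show False using fat hv_le_hmax[of "G q" p] by simp
    qed
    then obtain w where w: "w \<noteq> p" "hv (G q) w > 0" by blast
    have "alive_val 2 G R w" unfolding alive_val_def using w p2_fat.hyps(3) by blast
    then have "hv R v \<le> hv R w" using p2_fat.hyps(2) by blast
    then show False using p(3) w vp by fastforce
  qed
  have m: "{#t#} \<subseteq># G q" using p2_fat.hyps(6) by simp
  have mp: "hv {#t#} p = 0" using vp p2_fat.hyps(7) by (simp add: hv_single)
  have m1: "\<forall>w. hv {#t#} w \<le> 1" by (simp add: hv_single)
  have me: "eligible 2 (G q - {#t#})" unfolding eligible2_iff
  proof
    fix w
    have "hv (G q - {#t#}) w \<le> hv (G q) w" by (rule hv_mono) simp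
    also have "\<dots> \<le> hmax (G q)" by (rule hv_le_hmax)
    finally have "2 * hv (G q - {#t#}) w \<le> 2 * hmax (G q)" by simp
    moreover have "size (G q - {#t#}) = size (G q) - 1" using p2_fat.hyps(6) by (rule size_Diff_singleton)
    ultimately show "2 * hv (G q - {#t#}) w \<le> size (G q - {#t#})"
      using p2_fat.hyps(5) unfolding fat_def by simp
  qed
  have "Inv T (if eligible 2 (R + {#t#}) then Terminated else PhaseTwo, G(q := G q - {#t#}), R + {#t#}) \<and>
         mu T (if eligible 2 (R + {#t#}) then Terminated else PhaseTwo, G(q := G q - {#t#}), R + {#t#}) < mu T (PhaseTwo, G, R)"
    by (rule step2[OF b el ne bd p(2,1,3) m mp m1 _ _ me]) simp_all
  then show ?case using p2_fat.hyps(8,9) by simp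
next
  case (p2_thin G R v q M G' R')
  have b: "Base T G R" and el: "\<forall>r. eligible 2 (G r)" and ne: "\<not> eligible 2 R"
    and bd: "\<forall>Q'. feasible_sol 2 T Q' \<longrightarrow> 2 * hmax R \<le> size (residue T Q')"
    using p2_thin.prems by auto
  obtain p where p: "size R < 2 * hv R p" "hv R p = hmax R" "\<forall>w. w \<noteq> p \<longrightarrow> hv R w < hv R p"
    "pillars R = {p}" using noneli_dom[OF ne] by blast
  have sub: "G q \<subseteq># grp T q" using b unfolding Base_def by blast
  have tf: "M \<subseteq># G q \<and> 1 \<le> size M \<and> size M \<le> 2 \<and>
         (\<forall>w. hv M w = (if hv (G q) w > 0 \<and> hv (G q) w = hmax (G q) then 1 else 0)) \<and>
         eligible 2 (G q - M)"
    using thin_facts[OF sub p2_thin.hyps(5,4) refl] p2_thin.hyps(6) by simp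
  have "\<not> conflicting (G q) R" using p2_thin.hyps(3,5) unfolding alive_grp_def dead_def by simp
  then have "p \<notin> pillars (G q)" using p(4) unfolding conflicting_def by auto
  then have mp: "hv M p = 0" using tf unfolding pillars_def by simp
  have m1: "\<forall>w. hv M w \<le> 1" using tf by simp
  have "Inv T (if eligible 2 (R + M) then Terminated else PhaseTwo, G(q := G q - M), R + M) \<and>
         mu T (if eligible 2 (R + M) then Terminated else PhaseTwo, G(q := G q - M), R + M) < mu T (PhaseTwo, G, R)"
    using tf by (intro step2[OF b el ne bd p(2,1,3) _ mp m1]) simp_all
  then show ?case using p2_thin.hyps(7,8) by simp
qed


lemma progress:
  assumes inv: "Inv T s" and eT: "eligible 2 T" and nt: "fst s \<noteq> Terminated"
  shows "\<exists>s'. alg_step 2 s s'"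
proof -
  obtain ph G R where s: "s = (ph, G, R)" by (cases s) auto
  show ?thesis
  proof (cases ph)
    case (PhaseOne qs')
    show ?thesis
    proof (cases qs')
      case Nil
      then show ?thesis using s PhaseOne
        by (cases "eligible 2 R") (auto intro: alg_step.p1_term alg_step.p1_to_p2)
    next
      case (Cons q qs)
      show ?thesis
      proof (cases "eligible 2 (G q)")
        case True
        then show ?thesis using s PhaseOne Cons by (auto intro: alg_step.p1_next)
      next
        case False
        then have "hmax (G q) > 0" unfolding eligible_def by simp
        then obtain t where t: "t \<in># G q" "hv (G q) (snd t) = hmax (G q)" using hmax_ex by blast
        then have "snd t \<in> pillars (G q)" by (simp add: pillars_def)
        then have "alg_step 2 (PhaseOne (q # qs), G, R) (PhaseOne (q # qs), G(q := G q - {#t#}), R + {#t#})"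
          using False t(1) by (rule alg_step.p1_move[rotated 2])
        then show ?thesis using s PhaseOne Cons by blast
      qed
    qed
  next
    case PhaseTwo
    have b: "Base T G R" and el: "\<forall>r. eligible 2 (G r)" and ne: "\<not> eligible 2 R"
      using inv s PhaseTwo by auto
    have ex: "\<exists>v. alive_val 2 G R v" using alive_exists[OF b ne eT] .
    define k where "k = (LEAST k. \<exists>v. alive_val 2 G R v \<and> hv R v = k)"
    have "\<exists>v. alive_val 2 G R v \<and> hv R v = k" unfolding k_def
      by (rule LeastI_ex) (use ex in blast)
    then obtain v where v: "alive_val 2 G R v" "hv R v = k" by blast
    have mn: "\<forall>w. alive_val 2 G R w \<longrightarrow> hv R v \<le> hv R w"
    proof (intro allI impI)
      fix w assume "alive_val 2 G R w"
      then have "k \<le> hv R w" unfolding k_def by (intro Least_le) blast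
      then show "hv R v \<le> hv R w" using v(2) by simp
    qed
    obtain q where q: "alive_grp 2 (G q) R" "hv (G q) v > 0" using v(1) unfolding alive_val_def by blast
    have "2 * hmax (G q) \<le> size (G q)" using el unfolding eligible_def by simp
    then consider (th) "thin 2 (G q)" | (ft) "fat 2 (G q)" unfolding thin_def fat_def by linarith
    then show ?thesis
    proof cases
      case th
      let ?M = "mset_set {t \<in> set_mset (G q). snd t \<in> pillars (G q)}"
      have "alg_step 2 (PhaseTwo, G, R) (if eligible 2 (R + ?M) then Terminated else PhaseTwo, G(q := G q - ?M), R + ?M)"
        by (rule alg_step.p2_thin[OF v(1) mn q th refl refl refl])
      then show ?thesis using s PhaseTwo by blast
    next
      case ft
      have "v \<in> snd ` set_mset (G q)" using q(2) by (rule hv_pos_mem)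
      then obtain t where t: "t \<in># G q" "snd t = v" by blast
      have "alg_step 2 (PhaseTwo, G, R) (if eligible 2 (R + {#t#}) then Terminated else PhaseTwo, G(q := G q - {#t#}), R + {#t#})"
        by (rule alg_step.p2_fat[OF v(1) mn q ft t refl refl])
      then show ?thesis using s PhaseTwo by blast
    qed
  next
    case Terminated then show ?thesis using nt s by simp
  next
    case PhaseTwoEnded then show ?thesis using inv s by simp
  qed
qed

lemma inv_init:
  assumes "set qs = qis T"
  shows "Inv T (alg_init T qs)"
proof -
  have "Base T (grp T) {#}" unfolding Base_def using T_decomp[of T] by simp
  moreover have "eligible 2 (grp T q)" if "q \<notin> set qs" for q
    using that assms grp_out[of q T] by (simp add: eligible_def hmax_def)
  ultimately show ?thesis unfolding alg_init_def by (simp add: RI_init)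
qed

theorem theorem2:
  fixes T :: "('q \<times> 's) multiset" and qs :: "'q list"
  assumes "eligible 2 T" and "distinct qs" and "set qs = qis T"
  shows "(\<not> (\<exists>f. f 0 = alg_init T qs \<and> (\<forall>i. alg_step 2 (f i) (f (Suc i))))) \<and>
         (\<forall>s. (alg_step 2)\<^sup>*\<^sup>* (alg_init T qs) s \<and> (\<nexists>s'. alg_step 2 s s')
           \<longrightarrow> fst s = Terminated) \<and>
         (\<forall>G R. (alg_step 2)\<^sup>*\<^sup>* (alg_init T qs) (Terminated, G, R) \<longrightarrow>
           feasible_sol 2 T G \<and> R = residue T G \<and> size R \<le> OPT 2 T + 1)"
proof -
  have init: "Inv T (alg_init T qs)" using inv_init[OF assms(3)] .
  have reach: "Inv T s" if "(alg_step 2)\<^sup>*\<^sup>* (alg_init T qs) s" for s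
    using that
  proof (induction rule: rtranclp_induct)
    case base then show ?case using init .
  next
    case (step y z) then show ?case using inv_step assms(1) by blast
  qed
  have P1: "\<not> (\<exists>f. f 0 = alg_init T qs \<and> (\<forall>i. alg_step 2 (f i) (f (Suc i))))"
  proof
    assume "\<exists>f. f 0 = alg_init T qs \<and> (\<forall>i. alg_step 2 (f i) (f (Suc i)))"
    then obtain f where f0: "f 0 = alg_init T qs" and fs: "\<And>i. alg_step 2 (f i) (f (Suc i))" by blast
    have fi: "Inv T (f i) \<and> mu T (f i) + i \<le> mu T (f 0)" for i
    proof (induction i)
      case 0 then show ?case using init f0 by simp
    next
      case (Suc i)
      then have "Inv T (f (Suc i)) \<and> mu T (f (Suc i)) < mu T (f i)"
        using inv_step[OF fs[of i] _ assms(1)] by blast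
      then show ?case using Suc by simp
    qed
    then show False using fi[of "Suc (mu T (f 0))"] by simp
  qed
  have P2: "\<forall>s. (alg_step 2)\<^sup>*\<^sup>* (alg_init T qs) s \<and> (\<nexists>s'. alg_step 2 s s') \<longrightarrow> fst s = Terminated"
    using reach progress assms(1) by blast
  have P3: "feasible_sol 2 T G \<and> R = residue T G \<and> size R \<le> OPT 2 T + 1"
    if r: "(alg_step 2)\<^sup>*\<^sup>* (alg_init T qs) (Terminated, G, R)" for G R
  proof -
    have i: "feasible_sol 2 T G" "R = residue T G"
      "\<forall>Q'. feasible_sol 2 T Q' \<longrightarrow> size R \<le> size (residue T Q') + 1"
      using reach[OF r] by auto
    define X where "X = {size (residue T Q') | Q'. feasible_sol 2 T Q'}"
    have "X \<subseteq> {..size T}" unfolding X_def residue_def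
      by (auto intro: size_mset_mono)
    then have fX: "finite X" by (rule finite_subset) simp
    have "X \<noteq> {}" using i(1) unfolding X_def by blast
    then have "OPT 2 T \<in> X" unfolding OPT_def X_def[symmetric] using fX by (rule Min_in[rotated])
    then obtain Q' where "feasible_sol 2 T Q'" "OPT 2 T = size (residue T Q')" unfolding X_def by blast
    then show ?thesis using i by simp
  qed
  show ?thesis using P1 P2 P3 by blast
qed

end
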